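(* Let $\hat v$ be a rank-one discrete valuation on a complete field with valuation ring $R_{\hat v}$, maximal ideal $\mathfrak m_{\hat v}$, residue field $\Delta_{\hat v}$, containing a field $k$ of characteristic $0$ on which $\hat v$ is trivial, and let $\varphi:R_{\hat v}\to\Delta_{\hat v}$ be the natural homomorphism. Let $\mathbb F\subset R_{\hat v}$ and $\mathbb F'\subset\Delta_{\hat v}$ be subfields containing $k$ with $\varphi(\mathbb F)\subseteq \mathbb F'$, and let $\sigma:\mathbb F'\to\mathbb F$ be a $k$-homomorphism with $\varphi\circ\sigma=\mathrm{id}_{\mathbb F'}$. Let $\omega\in R_{\hat v}$ with $\hat v(\omega)=0$. If $\omega+\mathfrak m_{\hat v}$ is transcendental (resp. algebraic) over $\mathbb F'$, then there exists a $k$-section $\sigma':\Delta_{\hat v}\to R_{\hat v}$ of $\varphi$ (i.e. a $k$-homomorphism with $\varphi\circ\sigma'=\mathrm{id}$) extending $\sigma$ such that $\sigma'(\omega+\mathfrak m_{\hat v})$ is transcendental (resp. algebraic) over $\mathbb F$. *)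

theory Defs
  imports "HOL-Computational_Algebra.Polynomial"
begin

definition subfield :: "'a::field set \<Rightarrow> bool" where
  "subfield S \<longleftrightarrow> 0 \<in> S \<and> 1 \<in> S \<and>
     (\<forall>x\<in>S. \<forall>y\<in>S. x + y \<in> S \<and> x * y \<in> S) \<and>
     (\<forall>x\<in>S. - x \<in> S \<and> inverse x \<in> S)"

definition hom_on :: "'a::ring_1 set \<Rightarrow> ('a \<Rightarrow> 'b::ring_1) \<Rightarrow> bool" where
  "hom_on S f \<longleftrightarrow> f 1 = 1 \<and>
     (\<forall>x\<in>S. \<forall>y\<in>S. f (x + y) = f x + f y \<and> f (x * y) = f x * f y)"

definition algebraic_over :: "'a::field set \<Rightarrow> 'a \<Rightarrow> bool" where
  "algebraic_over S x \<longleftrightarrow> (\<exists>p::'a poly. p \<noteq> 0 \<and> (\<forall>i. coeff p i \<in> S) \<and> poly p x = 0)"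

definition transcendental_over :: "'a::field set \<Rightarrow> 'a \<Rightarrow> bool" where
  "transcendental_over S x \<longleftrightarrow> \<not> algebraic_over S x"

(* Rank-one discrete valuation: v is only meaningful on nonzero elements;
   values in \<int>, nontrivial (so the value group is infinite cyclic). *)
definition discrete_valuation :: "('a::field \<Rightarrow> int) \<Rightarrow> bool" where
  "discrete_valuation v \<longleftrightarrow>
     (\<forall>x y. x \<noteq> 0 \<longrightarrow> y \<noteq> 0 \<longrightarrow> v (x * y) = v x + v y) \<and>
     (\<forall>x y. x \<noteq> 0 \<longrightarrow> y \<noteq> 0 \<longrightarrow> x + y \<noteq> 0 \<longrightarrow> v (x + y) \<ge> min (v x) (v y)) \<and>
     (\<exists>x. x \<noteq> 0 \<and> v x \<noteq> 0)"

(* x and y are close to order N, i.e. v(x - y) \<ge> N (with v 0 = \<infinity>) *)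
definition vclose :: "('a::field \<Rightarrow> int) \<Rightarrow> int \<Rightarrow> 'a \<Rightarrow> 'a \<Rightarrow> bool" where
  "vclose v N x y \<longleftrightarrow> x = y \<or> v (x - y) \<ge> N"

definition v_complete :: "('a::field \<Rightarrow> int) \<Rightarrow> bool" where
  "v_complete v \<longleftrightarrow>
     (\<forall>X::nat \<Rightarrow> 'a. (\<forall>N. \<exists>M. \<forall>m\<ge>M. \<forall>n\<ge>M. vclose v N (X m) (X n)) \<longrightarrow>
        (\<exists>L. \<forall>N. \<exists>M. \<forall>n\<ge>M. vclose v N (X n) L))"

definition val_ring :: "('a::field \<Rightarrow> int) \<Rightarrow> 'a set" where
  "val_ring v = {x. x = 0 \<or> v x \<ge> 0}"

definition val_max_ideal :: "('a::field \<Rightarrow> int) \<Rightarrow> 'a set" where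
  "val_max_ideal v = {x. x = 0 \<or> v x > 0}"

definition residue_map :: "('a::field \<Rightarrow> int) \<Rightarrow> ('a \<Rightarrow> 'b::field) \<Rightarrow> bool" where
  "residue_map v \<phi> \<longleftrightarrow> hom_on (val_ring v) \<phi> \<and> \<phi> ` val_ring v = UNIV \<and>
     (\<forall>x\<in>val_ring v. \<phi> x = 0 \<longleftrightarrow> x \<in> val_max_ideal v)"

end

theory Submission
  imports Defs
begin


definition vge :: "('a::field \<Rightarrow> int) \<Rightarrow> int \<Rightarrow> 'a \<Rightarrow> bool" where
  "vge v N x \<longleftrightarrow> x = 0 \<or> v x \<ge> N"

definition polyin :: "'a::zero set \<Rightarrow> 'a poly \<Rightarrow> bool" where
  "polyin S p \<longleftrightarrow> (\<forall>i. coeff p i \<in> S)"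

lemma polyin_pCons[simp]: "polyin S (pCons c p) \<longleftrightarrow> c \<in> S \<and> polyin S p"
  unfolding polyin_def by (auto simp: coeff_pCons split: nat.splits)

lemma hom_poly:
  assumes f0: "f 0 = 0" and hom: "\<forall>x\<in>S. \<forall>y\<in>S. f(x+y) = f x + f y \<and> f(x*y) = f x * f y"
    and S0: "0 \<in> S" and cl: "\<forall>x\<in>S. \<forall>y\<in>S. x+y\<in>S \<and> x*y\<in>S"
    and p: "polyin S p" and x: "x \<in> S"
  shows "f (poly p x) = poly (map_poly f p) (f x) \<and> poly p x \<in> S"
  using p
proof (induction p)
  case 0
  then show ?case using f0 S0 by simp
next
  case (pCons a p)
  then have a: "a \<in> S" and IH: "f (poly p x) = poly (map_poly f p) (f x)" "poly p x \<in> S" by auto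
  have "x * poly p x \<in> S" using cl x IH by auto
  then show ?case using IH a x hom cl by (simp add: map_poly_pCons f0)
qed

locale dv =
  fixes v :: "'a::field_char_0 \<Rightarrow> int" and \<phi> :: "'a \<Rightarrow> 'b::field"
  assumes val: "discrete_valuation v" and res: "residue_map v \<phi>"
begin

abbreviation "R \<equiv> val_ring v"

lemma vmult: "x \<noteq> 0 \<Longrightarrow> y \<noteq> 0 \<Longrightarrow> v (x*y) = v x + v y"
  using val unfolding discrete_valuation_def by blast

lemma vadd: "x \<noteq> 0 \<Longrightarrow> y \<noteq> 0 \<Longrightarrow> x + y \<noteq> 0 \<Longrightarrow> v (x+y) \<ge> min (v x) (v y)"
  using val unfolding discrete_valuation_def by blast

lemma v1: "v 1 = 0"
  using vmult[of 1 1] by simp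

lemma vm1: "v (-1) = 0"
  using vmult[of "-1" "-1"] v1 by simp

lemma vneg: "v (-x) = v x"
proof (cases "x = 0")
  case False
  then show ?thesis using vmult[of "-1" x] vm1 by simp
qed simp

lemma vinv: "x \<noteq> 0 \<Longrightarrow> v (inverse x) = - v x"
  using vmult[of x "inverse x"] v1 by simp

lemma vge_add: "vge v N x \<Longrightarrow> vge v N y \<Longrightarrow> vge v N (x + y)"
  unfolding vge_def using vadd[of x y] by fastforce

lemma vge_neg: "vge v N x \<Longrightarrow> vge v N (- x)"
  unfolding vge_def using vneg[of x] by auto

lemma vge_neg_iff: "vge v N (- x) = vge v N x"
  unfolding vge_def using vneg[of x] by auto

lemma vge_diff: "vge v N x \<Longrightarrow> vge v N y \<Longrightarrow> vge v N (x - y)"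
  using vge_add[of N x "-y"] vge_neg[of N y] by simp

lemma vge_mono: "vge v N x \<Longrightarrow> M \<le> N \<Longrightarrow> vge v M x"
  unfolding vge_def by auto

lemma vge_mult: "vge v N x \<Longrightarrow> vge v M y \<Longrightarrow> vge v (N + M) (x * y)"
  unfolding vge_def using vmult[of x y] by (cases "x = 0"; cases "y = 0"; auto)

lemma vge_mult0: "vge v N x \<Longrightarrow> vge v 0 y \<Longrightarrow> vge v N (x * y)"
  using vge_mult[of N x 0 y] by simp

lemma vge_0: "vge v N 0"
  unfolding vge_def by simp

lemma R_iff: "x \<in> R \<longleftrightarrow> vge v 0 x"
  unfolding vge_def val_ring_def by simp

lemma M_iff: "x \<in> val_max_ideal v \<longleftrightarrow> vge v 1 x"
  unfolding vge_def val_max_ideal_def by auto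

lemma R0: "0 \<in> R" and R1: "1 \<in> R"
  by (auto simp: R_iff vge_def v1)

lemma Radd: "x \<in> R \<Longrightarrow> y \<in> R \<Longrightarrow> x + y \<in> R"
  by (simp add: R_iff vge_add)
lemma Rneg: "x \<in> R \<Longrightarrow> - x \<in> R"
  by (simp add: R_iff vge_neg)
lemma Rdiff: "x \<in> R \<Longrightarrow> y \<in> R \<Longrightarrow> x - y \<in> R"
  by (simp add: R_iff vge_diff)
lemma Rmult: "x \<in> R \<Longrightarrow> y \<in> R \<Longrightarrow> x * y \<in> R"
  using vge_mult[of 0 x 0 y] by (simp add: R_iff)
lemma Rnat: "of_nat n \<in> R"
  by (induction n) (auto simp: R0 R1 Radd)
lemma Rpow: "x \<in> R \<Longrightarrow> x ^ n \<in> R"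
  by (induction n) (auto simp: R1 Rmult)

lemma \<phi>1: "\<phi> 1 = 1"
  using res unfolding residue_map_def hom_on_def by blast
lemma \<phi>add: "x \<in> R \<Longrightarrow> y \<in> R \<Longrightarrow> \<phi> (x + y) = \<phi> x + \<phi> y"
  using res unfolding residue_map_def hom_on_def by blast
lemma \<phi>mult: "x \<in> R \<Longrightarrow> y \<in> R \<Longrightarrow> \<phi> (x * y) = \<phi> x * \<phi> y"
  using res unfolding residue_map_def hom_on_def by blast
lemma \<phi>0: "\<phi> 0 = 0"
proof -
  have "\<phi> 0 = \<phi> 0 + \<phi> 0" using \<phi>add[OF R0 R0] by simp
  then show ?thesis by (metis add_cancel_left_right)
qed
lemma \<phi>neg: "x \<in> R \<Longrightarrow> \<phi> (- x) = - \<phi> x"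
  using \<phi>add[of x "-x"] Rneg[of x] \<phi>0 by (simp add: eq_neg_iff_add_eq_0 add.commute)
lemma \<phi>diff: "x \<in> R \<Longrightarrow> y \<in> R \<Longrightarrow> \<phi> (x - y) = \<phi> x - \<phi> y"
  using \<phi>add[of x "-y"] \<phi>neg[of y] Rneg[of y] by simp
lemma \<phi>surj: "\<exists>a\<in>R. \<phi> a = t"
  using res unfolding residue_map_def by (metis UNIV_I imageE)
lemma \<phi>ker: "x \<in> R \<Longrightarrow> \<phi> x = 0 \<longleftrightarrow> vge v 1 x"
  using res unfolding residue_map_def by (simp add: M_iff)
lemma \<phi>eq: "x \<in> R \<Longrightarrow> y \<in> R \<Longrightarrow> \<phi> x = \<phi> y \<longleftrightarrow> vge v 1 (x - y)"
  using \<phi>ker[of "x - y"] \<phi>diff[of x y] Rdiff[of x y] by simp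

lemma unit: "x \<in> R \<Longrightarrow> \<phi> x \<noteq> 0 \<Longrightarrow> x \<noteq> 0 \<and> v x = 0"
  using \<phi>ker[of x] by (auto simp: R_iff vge_def)

lemma unit_inv: "x \<in> R \<Longrightarrow> \<phi> x \<noteq> 0 \<Longrightarrow> inverse x \<in> R \<and> \<phi> (inverse x) = inverse (\<phi> x)"
proof -
  assume x: "x \<in> R" "\<phi> x \<noteq> 0"
  then have u: "x \<noteq> 0" "v x = 0" using unit by auto
  then have ix: "inverse x \<in> R" using vinv[of x] by (simp add: R_iff vge_def)
  then have "\<phi> x * \<phi> (inverse x) = 1" using \<phi>mult[OF x(1) ix] u \<phi>1 by simp
  then show ?thesis using ix x by (simp add: field_simps)
qed

lemma vge_div_unit: "vge v N y \<Longrightarrow> x \<in> R \<Longrightarrow> \<phi> x \<noteq> 0 \<Longrightarrow> vge v N (y / x)"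
  using unit_inv[of x] vge_mult0[of N y "inverse x"] by (simp add: R_iff divide_inverse)

lemma R_cl: "\<forall>x\<in>R. \<forall>y\<in>R. x+y\<in>R \<and> x*y\<in>R"
  using Radd Rmult by blast
lemma \<phi>hom: "\<forall>x\<in>R. \<forall>y\<in>R. \<phi>(x+y) = \<phi> x + \<phi> y \<and> \<phi>(x*y) = \<phi> x * \<phi> y"
  using \<phi>add \<phi>mult by blast

lemma poly_R: "polyin R p \<Longrightarrow> x \<in> R \<Longrightarrow> poly p x \<in> R"
  using hom_poly[OF \<phi>0 \<phi>hom R0 R_cl] by blast
lemma \<phi>poly: "polyin R p \<Longrightarrow> x \<in> R \<Longrightarrow> \<phi> (poly p x) = poly (map_poly \<phi> p) (\<phi> x)"
  using hom_poly[OF \<phi>0 \<phi>hom R0 R_cl] by blast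

lemma polyin_pderiv_R: "polyin R p \<Longrightarrow> polyin R (pderiv p)"
  unfolding polyin_def coeff_pderiv using Rmult Rnat by blast

lemma taylor:
  assumes "polyin R p" "a \<in> R" "h \<in> R"
  shows "\<exists>c\<in>R. poly p (a+h) = poly p a + h * poly (pderiv p) a + h^2 * c"
  using assms(1)
proof (induction p)
  case 0
  then show ?case using R0 by auto
next
  case (pCons c0 q)
  then obtain c where c: "c \<in> R" "poly q (a+h) = poly q a + h * poly (pderiv q) a + h^2 * c"
    by auto
  have q': "poly (pderiv q) a \<in> R" using pCons polyin_pderiv_R poly_R assms by auto
  define c' where "c' = poly (pderiv q) a + a * c + h * c"
  have "c' \<in> R" unfolding c'_def using q' c assms by (simp add: Radd Rmult)
  moreover have "poly (pCons c0 q) (a+h) = poly (pCons c0 q) a + h * poly (pderiv (pCons c0 q)) a + h^2 * c'"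
    by (simp add: pderiv_pCons c c'_def algebra_simps power2_eq_square)
  ultimately show ?case by blast
qed

lemma poly_diff_vge:
  assumes "polyin R p" "a \<in> R" "b \<in> R" "vge v N (b - a)"
  shows "vge v N (poly p b - poly p a)"
proof -
  obtain c where c: "c \<in> R" "poly p (a + (b - a)) = poly p a + (b-a) * poly (pderiv p) a + (b-a)^2 * c"
    using taylor[OF assms(1,2) Rdiff[OF assms(3,2)]] by blast
  have "poly p b - poly p a = (b - a) * (poly (pderiv p) a + (b - a) * c)"
    using c(2) by (simp add: algebra_simps power2_eq_square)
  moreover have "poly (pderiv p) a + (b - a) * c \<in> R"
    using c assms polyin_pderiv_R poly_R Rdiff Rmult Radd by simp
  ultimately show ?thesis using vge_mult0 assms(4) R_iff by simp
qed

end

locale dvc = dv + assumes compl: "v_complete v"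
begin

lemma vclose_iff: "vclose v N x y \<longleftrightarrow> vge v N (x - y)"
  unfolding vclose_def vge_def by auto

lemma hensel:
  assumes f: "polyin R f" and a: "a \<in> R" and fa: "\<phi> (poly f a) = 0"
    and dfa: "\<phi> (poly (pderiv f) a) \<noteq> 0"
  shows "\<exists>\<alpha>\<in>R. poly f \<alpha> = 0 \<and> \<phi> \<alpha> = \<phi> a"
proof -
  define s where "s = rec_nat a (\<lambda>_ x. x - poly f x / poly (pderiv f) x)"
  have s0: "s 0 = a" and sS: "\<And>n. s (Suc n) = s n - poly f (s n) / poly (pderiv f) (s n)"
    by (simp_all add: s_def)
  have df: "polyin R (pderiv f)" using f polyin_pderiv_R by blast
  have inv: "s n \<in> R \<and> \<phi> (s n) = \<phi> a \<and> vge v (int n + 1) (poly f (s n))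
        \<and> vge v (int n + 1) (s (Suc n) - s n)" for n
  proof (induction n)
    case 0
    have "vge v 1 (poly f a)" using \<phi>ker[OF poly_R[OF f a]] fa by simp
    moreover have "\<phi> (poly (pderiv f) a) \<noteq> 0" by fact
    ultimately have "vge v 1 (s (Suc 0) - s 0)"
      using vge_div_unit[of 1 "poly f a" "poly (pderiv f) a"] poly_R[OF df a] vge_neg
      by (simp add: s0 sS)
    then show ?case using a \<open>vge v 1 (poly f a)\<close> by (simp add: s0)
  next
    case (Suc n)
    define x where "x = s n"
    define d where "d = poly (pderiv f) x"
    define h where "h = - (poly f x / d)"
    have x: "x \<in> R" "\<phi> x = \<phi> a" "vge v (int n + 1) (poly f x)" using Suc x_def by auto
    have dR: "d \<in> R" using poly_R[OF df x(1)] d_def by simp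
    have "\<phi> d = \<phi> (poly (pderiv f) a)" using \<phi>poly[OF df x(1)] \<phi>poly[OF df a] x(2) d_def by simp
    then have d0: "\<phi> d \<noteq> 0" using dfa by simp
    then have dnz: "d \<noteq> 0" using \<phi>0 by auto
    have hv: "vge v (int n + 1) h" unfolding h_def
      using vge_neg vge_div_unit[OF x(3) dR d0] by blast
    then have hR: "h \<in> R" using vge_mono R_iff by fastforce
    have sSn: "s (Suc n) = x + h" by (simp add: sS x_def d_def h_def)
    have xh: "s (Suc n) \<in> R" using sSn x hR Radd by simp
    have "\<phi> h = 0" using hv \<phi>ker[OF hR] vge_mono by fastforce
    then have phis: "\<phi> (s (Suc n)) = \<phi> a" using sSn \<phi>add[OF x(1) hR] x by simp
    obtain c where c: "c \<in> R" "poly f (x+h) = poly f x + h * d + h^2 * c"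
      using taylor[OF f x(1) hR] d_def by blast
    have "h * d = - poly f x" using dnz by (simp add: h_def)
    then have pf: "poly f (s (Suc n)) = h^2 * c" using c sSn by simp
    have "vge v ((int n + 1) + (int n + 1)) (h^2)"
      using vge_mult[OF hv hv] by (simp add: power2_eq_square)
    then have "vge v (int (Suc n) + 1) (h^2)" using vge_mono by fastforce
    then have pfv: "vge v (int (Suc n) + 1) (poly f (s (Suc n)))"
      using pf vge_mult0 c R_iff by simp
    define d2 where "d2 = poly (pderiv f) (s (Suc n))"
    have d2R: "d2 \<in> R" using poly_R[OF df xh] d2_def by simp
    have "\<phi> d2 = \<phi> (poly (pderiv f) a)" using \<phi>poly[OF df xh] \<phi>poly[OF df a] phis d2_def by simp
    then have d20: "\<phi> d2 \<noteq> 0" using dfa by simp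
    have "vge v (int (Suc n) + 1) (s (Suc (Suc n)) - s (Suc n))"
      using vge_neg vge_div_unit[OF pfv d2R d20] by (simp add: sS d2_def)
    then show ?case using xh phis pfv by blast
  qed
  have cauchy: "vge v (int n + 1) (s m - s n)" if "n \<le> m" for n m
    using that
  proof (induction m rule: dec_induct)
    case base
    then show ?case by (simp add: vge_0)
  next
    case (step m)
    have "vge v (int n + 1) (s (Suc m) - s m)" using inv[of m] vge_mono step by fastforce
    from vge_add[OF this step(3)] show ?case by simp
  qed
  have "\<forall>N. \<exists>M. \<forall>m\<ge>M. \<forall>n\<ge>M. vclose v N (s m) (s n)"
  proof
    fix N
    show "\<exists>M. \<forall>m\<ge>M. \<forall>n\<ge>M. vclose v N (s m) (s n)"
    proof (intro exI allI impI)
      fix m n assume mn: "nat N \<le> m" "nat N \<le> n"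
      have "vge v (int (nat N) + 1) (s m - s (nat N) - (s n - s (nat N)))"
        using vge_diff cauchy mn by blast
      then have "vge v N (s m - s n)" using vge_mono by fastforce
      then show "vclose v N (s m) (s n)" by (simp add: vclose_iff)
    qed
  qed
  then obtain \<alpha> where lim: "\<forall>N. \<exists>M. \<forall>n\<ge>M. vge v N (s n - \<alpha>)"
    using compl unfolding v_complete_def vclose_iff by blast
  obtain M1 where M1: "\<forall>n\<ge>M1. vge v 1 (s n - \<alpha>)" using lim by blast
  have sM: "s M1 \<in> R" "\<phi> (s M1) = \<phi> a" using inv by auto
  have aR: "\<alpha> \<in> R"
  proof -
    have "s M1 - \<alpha> \<in> R" using M1 vge_mono R_iff by fastforce
    then have "s M1 - (s M1 - \<alpha>) \<in> R" using sM Rdiff by blast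
    then show ?thesis by simp
  qed
  have pa: "\<phi> \<alpha> = \<phi> a" using \<phi>eq[OF sM(1) aR] M1 sM by simp
  have "poly f \<alpha> = 0"
  proof (rule ccontr)
    assume nz: "poly f \<alpha> \<noteq> 0"
    define N where "N = max 1 (v (poly f \<alpha>) + 1)"
    obtain M where M: "\<forall>n\<ge>M. vge v N (s n - \<alpha>)" using lim by blast
    define n where "n = max M (nat N)"
    have sn: "s n \<in> R" "vge v (int n + 1) (poly f (s n))" using inv by auto
    have "vge v N (poly f (s n) - poly f \<alpha>)"
      using poly_diff_vge[OF f aR sn(1)] M n_def by simp
    moreover have "vge v N (poly f (s n))" using sn(2) vge_mono n_def by fastforce
    ultimately have "vge v N (poly f (s n) - (poly f (s n) - poly f \<alpha>))" using vge_diff by blast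
    then have "vge v N (poly f \<alpha>)" by simp
    then show False using nz unfolding vge_def N_def by simp
  qed
  then show ?thesis using aR pa by blast
qed

end

lemma sf_0: "subfield L \<Longrightarrow> 0 \<in> L" and sf_1: "subfield L \<Longrightarrow> 1 \<in> L"
  unfolding subfield_def by auto
lemma sf_add: "subfield L \<Longrightarrow> x \<in> L \<Longrightarrow> y \<in> L \<Longrightarrow> x + y \<in> L"
  unfolding subfield_def by auto
lemma sf_mult: "subfield L \<Longrightarrow> x \<in> L \<Longrightarrow> y \<in> L \<Longrightarrow> x * y \<in> L"
  unfolding subfield_def by auto
lemma sf_neg: "subfield L \<Longrightarrow> x \<in> L \<Longrightarrow> - x \<in> L"
  unfolding subfield_def by auto
lemma sf_inv: "subfield L \<Longrightarrow> x \<in> L \<Longrightarrow> inverse x \<in> L"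
  unfolding subfield_def by auto
lemma sf_diff: "subfield L \<Longrightarrow> x \<in> L \<Longrightarrow> y \<in> L \<Longrightarrow> x - y \<in> L"
  using sf_add[of L x "-y"] sf_neg[of L y] by simp
lemma sf_nat: "subfield L \<Longrightarrow> of_nat n \<in> L"
  by (induction n) (auto simp: sf_0 sf_1 sf_add)
lemma sf_sum: assumes "subfield L"
  shows "finite A \<Longrightarrow> (\<And>i. i \<in> A \<Longrightarrow> f i \<in> L) \<Longrightarrow> sum f A \<in> L"
  by (induction A rule: finite_induct) (auto simp: sf_0[OF assms] sf_add[OF assms])

lemma polyin_0: "subfield L \<Longrightarrow> polyin L 0"
  by (simp add: polyin_def sf_0)

lemma polyin_add: "subfield L \<Longrightarrow> polyin L p \<Longrightarrow> polyin L q \<Longrightarrow> polyin L (p + q)"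
  unfolding polyin_def by (simp add: sf_add)
lemma polyin_neg: "subfield L \<Longrightarrow> polyin L p \<Longrightarrow> polyin L (- p)"
  unfolding polyin_def by (simp add: sf_neg)
lemma polyin_diff: "subfield L \<Longrightarrow> polyin L p \<Longrightarrow> polyin L q \<Longrightarrow> polyin L (p - q)"
  unfolding polyin_def by (simp add: sf_diff)
lemma polyin_mult: "subfield L \<Longrightarrow> polyin L p \<Longrightarrow> polyin L q \<Longrightarrow> polyin L (p * q)"
  unfolding polyin_def coeff_mult by (intro allI sf_sum) (auto simp: sf_mult)
lemma polyin_smult: "subfield L \<Longrightarrow> c \<in> L \<Longrightarrow> polyin L p \<Longrightarrow> polyin L (smult c p)"
  unfolding polyin_def by (simp add: sf_mult)
lemma polyin_monom: "subfield L \<Longrightarrow> c \<in> L \<Longrightarrow> polyin L (monom c n)"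
  unfolding polyin_def by (simp add: coeff_monom sf_0)
lemma polyin_const: "subfield L \<Longrightarrow> c \<in> L \<Longrightarrow> polyin L [:c:]"
  by (simp add: polyin_0)
lemma polyin_one: "subfield L \<Longrightarrow> polyin L 1"
  using polyin_const[of L 1] sf_1[of L] by (simp add: one_pCons)
lemma polyin_X: "subfield L \<Longrightarrow> polyin L [:0,1:]"
  by (simp add: sf_0 sf_1 polyin_0)
lemma polyin_pderiv: "subfield L \<Longrightarrow> polyin L p \<Longrightarrow> polyin L (pderiv p)"
  unfolding polyin_def coeff_pderiv using sf_mult sf_nat by blast
lemma polyin_mono: "polyin L p \<Longrightarrow> L \<subseteq> S \<Longrightarrow> polyin S p"
  unfolding polyin_def by auto

context dv
begin

lemma extend:
  assumes L: "subfield L" "L \<subseteq> R" and x: "x \<in> R" "x \<notin> L"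
    and P: "\<And>p. polyin L p \<Longrightarrow> \<phi> (poly p x) = 0 \<Longrightarrow> poly p x = 0"
  shows "\<exists>L'. subfield L' \<and> L' \<subseteq> R \<and> L \<subseteq> L' \<and> L' \<noteq> L"
proof -
  define L' where "L' = {poly p x / poly q x | p q. polyin L p \<and> polyin L q \<and> \<phi> (poly q x) \<noteq> 0}"
  have pR: "poly p x \<in> R" if "polyin L p" for p
    using poly_R[OF polyin_mono[OF that L(2)] x(1)] .
  have one: "\<phi> (poly 1 x) \<noteq> 0" using \<phi>1 by simp
  have memI: "poly p x / poly q x \<in> L'" if "polyin L p" "polyin L q" "\<phi> (poly q x) \<noteq> 0" for p q
    unfolding L'_def using that by blast
  have den: "\<phi> (poly (q * q') x) \<noteq> 0" if "polyin L q" "polyin L q'" "\<phi> (poly q x) \<noteq> 0" "\<phi> (poly q' x) \<noteq> 0" for q q'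
    using that \<phi>mult[OF pR pR] by simp
  have nz: "poly q x \<noteq> 0" if "\<phi> (poly q x) \<noteq> 0" for q
    using that \<phi>0 by auto
  have "subfield L'"
    unfolding subfield_def
  proof (intro conjI ballI)
    show "0 \<in> L'" using memI[of 0 1] polyin_one[OF L(1)] one by (simp add: polyin_def sf_0[OF L(1)])
    show "1 \<in> L'" using memI[of 1 1] polyin_one[OF L(1)] one by simp
  next
    fix a b assume a: "a \<in> L'" and b: "b \<in> L'"
    from a obtain p q where pq: "a = poly p x / poly q x" "polyin L p" "polyin L q" "\<phi> (poly q x) \<noteq> 0"
      unfolding L'_def by blast
    from b obtain p' q' where pq': "b = poly p' x / poly q' x" "polyin L p'" "polyin L q'" "\<phi> (poly q' x) \<noteq> 0"
      unfolding L'_def by blast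
    have "a + b = poly (p * q' + p' * q) x / poly (q * q') x"
      unfolding pq(1) pq'(1) using nz[OF pq(4)] nz[OF pq'(4)] by (simp add: field_simps)
    then show "a + b \<in> L'"
      using memI[of "p * q' + p' * q" "q * q'"] den[of q q'] pq pq' L(1)
      by (simp add: polyin_add polyin_mult)
    have "a * b = poly (p * p') x / poly (q * q') x"
      using pq pq' by simp
    then show "a * b \<in> L'"
      using memI[of "p * p'" "q * q'"] den[of q q'] pq pq' L(1)
      by (simp add: polyin_mult)
  next
    fix a assume a: "a \<in> L'"
    from a obtain p q where pq: "a = poly p x / poly q x" "polyin L p" "polyin L q" "\<phi> (poly q x) \<noteq> 0"
      unfolding L'_def by blast
    have "- a = poly (- p) x / poly q x" using pq by simp
    then show "- a \<in> L'" using memI[of "-p" q] pq polyin_neg[OF L(1)] by simp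
    show "inverse a \<in> L'"
    proof (cases "poly p x = 0")
      case True
      then have "inverse a = poly 0 x / poly 1 x" using pq by simp
      then show ?thesis using memI[of 0 1] polyin_one[OF L(1)] one
        by (simp add: polyin_def sf_0[OF L(1)])
    next
      case False
      then have "\<phi> (poly p x) \<noteq> 0" using P pq by blast
      moreover have "inverse a = poly q x / poly p x" using pq by simp
      ultimately show ?thesis using memI[of q p] pq by simp
    qed
  qed
  moreover have "L' \<subseteq> R"
  proof
    fix a assume "a \<in> L'"
    then obtain p q where pq: "a = poly p x / poly q x" "polyin L p" "polyin L q" "\<phi> (poly q x) \<noteq> 0"
      unfolding L'_def by blast
    then show "a \<in> R" using unit_inv[OF pR[of q]] pR[of p] Rmult by (simp add: divide_inverse)
  qed
  moreover have "L \<subseteq> L'"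
  proof
    fix c assume "c \<in> L"
    then show "c \<in> L'" using memI[of "[:c:]" 1] polyin_const[OF L(1)] polyin_one[OF L(1)] one by simp
  qed
  moreover have "x \<in> L'"
    using memI[of "[:0,1:]" 1] polyin_X[OF L(1)] polyin_one[OF L(1)] one by simp
  ultimately show ?thesis using x(2) by blast
qed

end

context dvc
begin

lemma sf_inj0: "subfield L \<Longrightarrow> L \<subseteq> R \<Longrightarrow> c \<in> L \<Longrightarrow> c \<noteq> 0 \<Longrightarrow> \<phi> c \<noteq> 0"
proof -
  assume L: "subfield L" "L \<subseteq> R" and c: "c \<in> L" "c \<noteq> 0"
  have ic: "inverse c \<in> L" using sf_inv L c by blast
  have "\<phi> c * \<phi> (inverse c) = 1" using \<phi>mult[of c "inverse c"] L c ic \<phi>1 by auto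
  then show ?thesis by auto
qed

lemma not_max:
  assumes L: "subfield L" "L \<subseteq> R" and t: "t \<notin> \<phi> ` L"
  shows "\<exists>L'. subfield L' \<and> L' \<subseteq> R \<and> L \<subseteq> L' \<and> L' \<noteq> L"
proof -
  obtain a where a: "a \<in> R" "\<phi> a = t" using \<phi>surj by blast
  have aL: "a \<notin> L" using a t by blast
  have pR: "polyin R p" if "polyin L p" for p using polyin_mono[OF that L(2)] .
  show ?thesis
  proof (cases "\<exists>f. polyin L f \<and> f \<noteq> 0 \<and> \<phi> (poly f a) = 0")
    case False
    show ?thesis
    proof (rule extend[OF L a(1) aL])
      fix p assume "polyin L p" "\<phi> (poly p a) = 0"
      then show "poly p a = 0" using False by (cases "p = 0") auto
    qed
  next
    case True
    define n where "n = (LEAST n. \<exists>f. polyin L f \<and> f \<noteq> 0 \<and> \<phi> (poly f a) = 0 \<and> degree f = n)"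
    have ex: "\<exists>n f. polyin L f \<and> f \<noteq> 0 \<and> \<phi> (poly f a) = 0 \<and> degree f = n" using True by blast
    obtain f0 where f0: "polyin L f0" "f0 \<noteq> 0" "\<phi> (poly f0 a) = 0" "degree f0 = n"
      using LeastI_ex[OF ex] unfolding n_def by blast
    have minim: "n \<le> degree g" if "polyin L g" "g \<noteq> 0" "\<phi> (poly g a) = 0" for g
      unfolding n_def using that by (intro Least_le) blast
    define c where "c = inverse (lead_coeff f0)"
    have cL: "c \<in> L" using sf_inv[OF L(1)] f0(1) unfolding c_def polyin_def by blast
    have c0: "c \<noteq> 0" using f0(2) by (simp add: c_def)
    define f where "f = smult c f0"
    have f: "polyin L f" "f \<noteq> 0" "degree f = n" "lead_coeff f = 1"
      using polyin_smult[OF L(1) cL f0(1)] f0 c0 by (auto simp: f_def c_def lead_coeff_smult)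
    have fa: "\<phi> (poly f a) = 0"
      using \<phi>mult[of c "poly f0 a"] cL L(2) poly_R[OF pR[OF f0(1)] a(1)] f0(3) \<phi>0
      by (auto simp: f_def)
    have n1: "n \<noteq> 0"
    proof
      assume "n = 0"
      then have "f = [:1:]" using f degree_0_id[of f] by auto
      then show False using fa \<phi>1 by simp
    qed
    have df: "polyin L (pderiv f)" using polyin_pderiv[OF L(1) f(1)] .
    have dfnz: "pderiv f \<noteq> 0" using f n1 pderiv_eq_0_iff[of f] by simp
    have "degree (pderiv f) < n" using degree_pderiv[of f] f n1 by simp
    then have dfa: "\<phi> (poly (pderiv f) a) \<noteq> 0" using minim[OF df dfnz] by auto
    obtain \<alpha> where al: "\<alpha> \<in> R" "poly f \<alpha> = 0" "\<phi> \<alpha> = \<phi> a"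
      using hensel[OF pR[OF f(1)] a(1) fa dfa] by blast
    have alL: "\<alpha> \<notin> L" using al a t by auto
    have alv: "vge v 1 (\<alpha> - a)" using \<phi>eq[OF al(1) a(1)] al(3) by simp
    have key: "\<forall>p. polyin L p \<and> degree p = d \<and> \<phi> (poly p \<alpha>) = 0 \<longrightarrow> poly p \<alpha> = 0" for d
    proof (induction d rule: less_induct)
      case (less d)
      show ?case
      proof (intro allI impI)
        fix p assume p: "polyin L p \<and> degree p = d \<and> \<phi> (poly p \<alpha>) = 0"
        show "poly p \<alpha> = 0"
        proof (cases "d < n")
          case True
          have "vge v 1 (poly p \<alpha> - poly p a)" using poly_diff_vge[OF pR a(1) al(1) alv] p by blast
          then have "\<phi> (poly p a) = 0"
            using \<phi>eq[OF poly_R[OF pR[of p] al(1)] poly_R[OF pR[of p] a(1)]] p by simp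
          then have "p = 0" using minim[of p] p True by fastforce
          then show ?thesis by simp
        next
          case False
          show ?thesis
          proof (cases "p = 0")
            case True then show ?thesis by simp
          next
            case pnz: False
            define k where "k = d - n"
            define g where "g = monom 1 k * f"
            have dg: "degree g = d" unfolding g_def using f False
              by (subst degree_mult_eq) (auto simp: degree_monom_eq k_def)
            have lg: "coeff g d = 1" unfolding g_def using f False coeff_mult_degree_sum[of "monom 1 k" f]
              by (simp add: degree_monom_eq k_def)
            define p2 where "p2 = p - smult (lead_coeff p) g"
            have lcL: "lead_coeff p \<in> L" using p unfolding polyin_def by blast
            have p2L: "polyin L p2" unfolding p2_def g_def
              using p polyin_diff[OF L(1) _ polyin_smult[OF L(1) lcL polyin_mult[OF L(1) polyin_monom[OF L(1) sf_1[OF L(1)]] f(1)]]]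
              by blast
            have "degree p2 \<le> d" unfolding p2_def using dg p
              by (intro degree_diff_le) (auto intro: order.trans[OF degree_smult_le])
            moreover have "coeff p2 d = 0" unfolding p2_def using lg p by simp
            moreover have "d \<noteq> 0" using False n1 by simp
            ultimately have lt: "degree p2 < d"
            proof -
              assume a1: "degree p2 \<le> d" and a2: "coeff p2 d = 0" and a3: "d \<noteq> 0"
              show "degree p2 < d"
              proof (rule ccontr)
                assume "\<not> degree p2 < d"
                then have "degree p2 = d" using a1 by simp
                then have "p2 = 0" using a2 leading_coeff_0_iff[of p2] by simp
                then show False using \<open>degree p2 = d\<close> a3 by simp
              qed
            qed
            have pv: "poly p2 \<alpha> = poly p \<alpha>" unfolding p2_def g_def using al(2) by simp
            then have "poly p2 \<alpha> = 0" using less[OF lt] p2L p by auto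
            then show ?thesis using pv by simp
          qed
        qed
      qed
    qed
    show ?thesis
    proof (rule extend[OF L al(1) alL])
      fix p assume "polyin L p" "\<phi> (poly p \<alpha>) = 0"
      then show "poly p \<alpha> = 0" using key by blast
    qed
  qed
qed

end

lemma chain_union_subfield:
  assumes C: "C \<noteq> {}" "\<forall>X\<in>C. subfield X" "\<forall>X\<in>C. \<forall>Y\<in>C. X \<subseteq> Y \<or> Y \<subseteq> X"
  shows "subfield (\<Union>C)"
proof -
  have two: "\<exists>Z\<in>C. x \<in> Z \<and> y \<in> Z" if xy: "x \<in> \<Union>C" "y \<in> \<Union>C" for x y
  proof -
    obtain X Y where "X \<in> C" "Y \<in> C" "x \<in> X" "y \<in> Y" using xy by blast
    then show ?thesis using C(3) by blast
  qed
  obtain X0 where X0: "X0 \<in> C" using C(1) by blast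
  show ?thesis unfolding subfield_def
  proof (intro conjI ballI)
    show "0 \<in> \<Union>C" "1 \<in> \<Union>C" using X0 C(2) sf_0 sf_1 by blast+
  next
    fix x y assume "x \<in> \<Union>C" "y \<in> \<Union>C"
    then obtain Z where "Z \<in> C" "x \<in> Z" "y \<in> Z" using two by blast
    then show "x + y \<in> \<Union>C" "x * y \<in> \<Union>C" using C(2) sf_add sf_mult by blast+
  next
    fix x assume "x \<in> \<Union>C"
    then obtain Z where "Z \<in> C" "x \<in> Z" by blast
    then show "- x \<in> \<Union>C" "inverse x \<in> \<Union>C" using C(2) sf_neg sf_inv by blast+
  qed
qed

context dvc
begin

lemma coeff_field:
  assumes F0: "subfield F0" "F0 \<subseteq> R"
  shows "\<exists>L. subfield L \<and> L \<subseteq> R \<and> F0 \<subseteq> L \<and> \<phi> ` L = UNIV"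
proof -
  define A where "A = {L. subfield L \<and> L \<subseteq> R \<and> F0 \<subseteq> L}"
  have "\<forall>C\<in>chains A. \<exists>U\<in>A. \<forall>X\<in>C. X \<subseteq> U"
  proof
    fix C assume C: "C \<in> chains A"
    show "\<exists>U\<in>A. \<forall>X\<in>C. X \<subseteq> U"
    proof (cases "C = {}")
      case True
      then show ?thesis using F0 unfolding A_def by blast
    next
      case False
      have CA: "C \<subseteq> A" and ch: "\<forall>X\<in>C. \<forall>Y\<in>C. X \<subseteq> Y \<or> Y \<subseteq> X"
        using C unfolding chains_def chain_subset_def by auto
      have "subfield (\<Union>C)" using chain_union_subfield[OF False _ ch] CA unfolding A_def by blast
      moreover have "\<Union>C \<subseteq> R" "F0 \<subseteq> \<Union>C" using CA False unfolding A_def by blast+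
      ultimately show ?thesis unfolding A_def by blast
    qed
  qed
  from Zorn_Lemma2[OF this] obtain M where M: "M \<in> A" "\<forall>X\<in>A. M \<subseteq> X \<longrightarrow> X = M" by blast
  have "\<phi> ` M = UNIV"
  proof (rule ccontr)
    assume "\<phi> ` M \<noteq> UNIV"
    then obtain t where "t \<notin> \<phi> ` M" by blast
    then obtain L' where "subfield L'" "L' \<subseteq> R" "M \<subseteq> L'" "L' \<noteq> M"
      using not_max[of M t] M(1) unfolding A_def by blast
    then show False using M unfolding A_def by blast
  qed
  then show ?thesis using M(1) unfolding A_def by blast
qed

lemma section_exists:
  assumes F0: "subfield F0" "F0 \<subseteq> R"
  shows "\<exists>s. (\<forall>y. s y \<in> R) \<and> hom_on UNIV s \<and> (\<forall>y. \<phi> (s y) = y) \<and> (\<forall>x\<in>F0. s (\<phi> x) = x)"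
proof -
  obtain L where L: "subfield L" "L \<subseteq> R" "F0 \<subseteq> L" "\<phi> ` L = UNIV"
    using coeff_field[OF F0] by blast
  have inj: "inj_on \<phi> L"
  proof (rule inj_onI)
    fix x y assume xy: "x \<in> L" "y \<in> L" "\<phi> x = \<phi> y"
    have "x - y \<in> L" using sf_diff[OF L(1) xy(1,2)] .
    moreover have "\<phi> (x - y) = 0" using \<phi>diff[of x y] xy L(2) by auto
    ultimately show "x = y" using sf_inj0[OF L(1,2)] by force
  qed
  define s where "s = the_inv_into L \<phi>"
  have sL: "s y \<in> L" for y unfolding s_def using the_inv_into_into[OF inj, of y L] L(4) by simp
  have ps: "\<phi> (s y) = y" for y unfolding s_def using f_the_inv_into_f[OF inj, of y] L(4) by simp
  have seq: "s y = x" if "x \<in> L" "\<phi> x = y" for x y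
    unfolding s_def using the_inv_into_f_eq[OF inj that(2,1)] .
  have "hom_on UNIV s" unfolding hom_on_def
  proof (intro conjI ballI)
    show "s 1 = 1" using seq[of 1 1] sf_1[OF L(1)] \<phi>1 by simp
  next
    fix x y :: 'b
    have R: "s x \<in> R" "s y \<in> R" using sL L(2) by auto
    show "s (x + y) = s x + s y"
      using seq[of "s x + s y" "x + y"] sf_add[OF L(1) sL sL] \<phi>add[OF R] ps by simp
    show "s (x * y) = s x * s y"
      using seq[of "s x * s y" "x * y"] sf_mult[OF L(1) sL sL] \<phi>mult[OF R] ps by simp
  qed
  moreover have "\<forall>x\<in>F0. s (\<phi> x) = x" using seq L(3) by blast
  ultimately show ?thesis using sL L(2) ps by blast
qed

end

theorem proposition5:
  fixes v :: "'a::field_char_0 \<Rightarrow> int"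
    and \<phi> :: "'a \<Rightarrow> 'b::field"
    and k F :: "'a set" and F' :: "'b set"
    and \<sigma> :: "'b \<Rightarrow> 'a" and \<omega> :: 'a
  assumes val: "discrete_valuation v"
    and compl: "v_complete v"
    and res: "residue_map v \<phi>"
    and k: "subfield k" "\<forall>c\<in>k. c \<noteq> 0 \<longrightarrow> v c = 0"
    and F: "subfield F" "k \<subseteq> F" "F \<subseteq> val_ring v"
    and F': "subfield F'" "\<phi> ` k \<subseteq> F'" "\<phi> ` F \<subseteq> F'"
    and \<sigma>: "\<forall>y\<in>F'. \<sigma> y \<in> F" "hom_on F' \<sigma>" "\<forall>c\<in>k. \<sigma> (\<phi> c) = c"
           "\<forall>y\<in>F'. \<phi> (\<sigma> y) = y"
    and \<omega>: "\<omega> \<in> val_ring v" "\<omega> \<noteq> 0" "v \<omega> = 0"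
  shows "(transcendental_over F' (\<phi> \<omega>) \<longrightarrow>
           (\<exists>\<sigma>'::'b \<Rightarrow> 'a. (\<forall>y. \<sigma>' y \<in> val_ring v) \<and> hom_on UNIV \<sigma>' \<and>
              (\<forall>c\<in>k. \<sigma>' (\<phi> c) = c) \<and> (\<forall>y. \<phi> (\<sigma>' y) = y) \<and>
              (\<forall>y\<in>F'. \<sigma>' y = \<sigma> y) \<and> transcendental_over F (\<sigma>' (\<phi> \<omega>))))
       \<and> (algebraic_over F' (\<phi> \<omega>) \<longrightarrow>
           (\<exists>\<sigma>'::'b \<Rightarrow> 'a. (\<forall>y. \<sigma>' y \<in> val_ring v) \<and> hom_on UNIV \<sigma>' \<and>
              (\<forall>c\<in>k. \<sigma>' (\<phi> c) = c) \<and> (\<forall>y. \<phi> (\<sigma>' y) = y) \<and>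
              (\<forall>y\<in>F'. \<sigma>' y = \<sigma> y) \<and> algebraic_over F (\<sigma>' (\<phi> \<omega>))))"
proof -
  interpret dvc v \<phi> by unfold_locales (rule val res compl)+
  have \<sigma>0: "\<sigma> 0 = 0"
  proof -
    have "\<sigma> 0 = \<sigma> 0 + \<sigma> 0" using \<sigma>(2) sf_0[OF F'(1)] unfolding hom_on_def by (metis add_0)
    then show ?thesis by (metis add_cancel_left_right)
  qed
  have \<sigma>add: "\<sigma> (x + y) = \<sigma> x + \<sigma> y" "\<sigma> (x * y) = \<sigma> x * \<sigma> y" if "x \<in> F'" "y \<in> F'" for x y
    using \<sigma>(2) that unfolding hom_on_def by auto
  have \<sigma>1: "\<sigma> 1 = 1" using \<sigma>(2) unfolding hom_on_def by auto
  define F0 where "F0 = \<sigma> ` F'"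
  have sF0: "subfield F0" unfolding subfield_def
  proof (intro conjI ballI)
    show "0 \<in> F0" using \<sigma>0 sf_0[OF F'(1)] unfolding F0_def by force
    show "1 \<in> F0" using \<sigma>1 sf_1[OF F'(1)] unfolding F0_def by force
  next
    fix a b assume "a \<in> F0" "b \<in> F0"
    then obtain x y where xy: "x \<in> F'" "y \<in> F'" "a = \<sigma> x" "b = \<sigma> y" unfolding F0_def by blast
    show "a + b \<in> F0" using xy \<sigma>add[of x y] sf_add[OF F'(1) xy(1,2)] unfolding F0_def by force
    show "a * b \<in> F0" using xy \<sigma>add[of x y] sf_mult[OF F'(1) xy(1,2)] unfolding F0_def by force
  next
    fix a assume "a \<in> F0"
    then obtain x where x: "x \<in> F'" "a = \<sigma> x" unfolding F0_def by blast
    have nx: "- x \<in> F'" using sf_neg[OF F'(1) x(1)] .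
    have "\<sigma> x + \<sigma> (- x) = 0" using \<sigma>add[OF x(1) nx] \<sigma>0 by simp
    then have "\<sigma> (- x) = - a" using x by (simp add: eq_neg_iff_add_eq_0 add.commute)
    then show "- a \<in> F0" using nx unfolding F0_def by force
    have ix: "inverse x \<in> F'" using sf_inv[OF F'(1) x(1)] .
    have "\<sigma> (inverse x) = inverse a"
    proof (cases "x = 0")
      case True then show ?thesis using x \<sigma>0 by simp
    next
      case False
      then have "\<sigma> x * \<sigma> (inverse x) = 1" using \<sigma>add(2)[OF x(1) ix] \<sigma>1 by simp
      then show ?thesis using x inverse_unique by metis
    qed
    then show "inverse a \<in> F0" using ix unfolding F0_def by force
  qed
  have F0R: "F0 \<subseteq> R" using \<sigma>(1) F(3) unfolding F0_def by blast
  obtain s where s: "\<forall>y. s y \<in> R" "hom_on UNIV s" "\<forall>y. \<phi> (s y) = y" "\<forall>x\<in>F0. s (\<phi> x) = x"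
    using section_exists[OF sF0 F0R] by blast
  have ext: "\<forall>y\<in>F'. s y = \<sigma> y"
  proof
    fix y assume y: "y \<in> F'"
    then have "s (\<phi> (\<sigma> y)) = \<sigma> y" using s(4) unfolding F0_def by blast
    then show "s y = \<sigma> y" using \<sigma>(4) y by simp
  qed
  have kk: "\<forall>c\<in>k. s (\<phi> c) = c" using ext \<sigma>(3) F'(2) by auto
  have s0: "s 0 = 0"
  proof -
    have "s 0 = s 0 + s 0" using s(2) unfolding hom_on_def by (metis add_0 UNIV_I)
    then show ?thesis by (metis add_cancel_left_right)
  qed
  have shom: "\<forall>x\<in>UNIV. \<forall>y\<in>UNIV. s(x+y) = s x + s y \<and> s(x*y) = s x * s y"
    using s(2) unfolding hom_on_def by auto
  define z where "z = s (\<phi> \<omega>)"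
  have zR: "z \<in> R" using s(1) z_def by simp
  have pz: "\<phi> z = \<phi> \<omega>" using s(3) z_def by simp
  have trans: "transcendental_over F z" if tr: "transcendental_over F' (\<phi> \<omega>)"
    unfolding transcendental_over_def
  proof
    assume "algebraic_over F z"
    then obtain p where p: "p \<noteq> 0" "\<forall>i. coeff p i \<in> F" "poly p z = 0"
      unfolding algebraic_over_def by blast
    define S where "S = {i. coeff p i \<noteq> 0}"
    have Sfin: "finite S" unfolding S_def
      by (rule finite_subset[of _ "{..degree p}"]) (auto intro: le_degree)
    have Sne: "S \<noteq> {}" using p(1) unfolding S_def by (metis (mono_tags) empty_Collect_eq leading_coeff_0_iff)
    define m where "m = Min ((\<lambda>i. v (coeff p i)) ` S)"
    have "m \<in> (\<lambda>i. v (coeff p i)) ` S" unfolding m_def using Sfin Sne by (intro Min_in) auto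
    then obtain j where j: "j \<in> S" "v (coeff p j) = m" by force
    have jm: "v (coeff p j) \<le> v (coeff p i)" if "i \<in> S" for i
      using Min_le[of "(\<lambda>i. v (coeff p i)) ` S"] Sfin that j unfolding m_def by auto
    define c where "c = coeff p j"
    have c0: "c \<noteq> 0" using j unfolding S_def c_def by simp
    define p' where "p' = smult (inverse c) p"
    have p'F: "\<forall>i. coeff p' i \<in> F" unfolding p'_def c_def using p(2) sf_mult[OF F(1)] sf_inv[OF F(1)] by simp
    have p'R: "polyin R p'" unfolding polyin_def
    proof
      fix i
      show "coeff p' i \<in> R"
      proof (cases "coeff p i = 0")
        case True then show ?thesis by (simp add: p'_def R0)
      next
        case False
        then have "v (coeff p' i) = v (coeff p i) - v c"
          using vmult[of "inverse c" "coeff p i"] vinv[OF c0] c0 by (simp add: p'_def)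
        moreover have "v c \<le> v (coeff p i)" using jm[of i] False unfolding S_def c_def by simp
        ultimately show ?thesis unfolding val_ring_def by simp
      qed
    qed
    have "poly p' z = 0" using p(3) by (simp add: p'_def)
    then have "poly (map_poly \<phi> p') (\<phi> \<omega>) = 0" using \<phi>poly[OF p'R zR] pz \<phi>0 by simp
    moreover have "coeff (map_poly \<phi> p') j = 1" using c0 \<phi>1 by (simp add: coeff_map_poly \<phi>0 p'_def c_def)
    moreover have "\<forall>i. coeff (map_poly \<phi> p') i \<in> F'" using p'F F'(3) by (auto simp: coeff_map_poly \<phi>0)
    ultimately have "algebraic_over F' (\<phi> \<omega>)" unfolding algebraic_over_def
      by (metis coeff_0 zero_neq_one)
    then show False using tr unfolding transcendental_over_def by blast
  qed
  have alg: "algebraic_over F z" if al: "algebraic_over F' (\<phi> \<omega>)"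
  proof -
    obtain q where q: "q \<noteq> 0" "\<forall>i. coeff q i \<in> F'" "poly q (\<phi> \<omega>) = 0"
      using al unfolding algebraic_over_def by blast
    have "s (poly q (\<phi> \<omega>)) = poly (map_poly s q) (s (\<phi> \<omega>))"
      using hom_poly[OF s0 shom] by (simp add: polyin_def)
    then have "poly (map_poly s q) z = 0" using q(3) s0 z_def by simp
    moreover have "\<forall>i. coeff (map_poly s q) i \<in> F"
      using q(2) ext \<sigma>(1) by (simp add: coeff_map_poly s0)
    moreover have "map_poly s q \<noteq> 0"
    proof
      assume "map_poly s q = 0"
      then have "s (lead_coeff q) = 0" by (metis coeff_0 coeff_map_poly s0)
      then have "lead_coeff q = \<phi> 0" using s(3) by metis
      then show False using q(1) \<phi>0 by simp
    qed
    ultimately show ?thesis unfolding algebraic_over_def by blast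
  qed
  show ?thesis using s(1,2,3) kk ext trans alg z_def by blast
qed

end
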